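(* Let $N\ge 2$, $0<k\le N$, and $\mathfrak D_0(N,k)=\mathfrak D(N,k)\cap\mathfrak{su}(N)$, where $\mathfrak D(N,k)$ is the set of skew-Hermitian $N\times N$ complex matrices $A$ with $A_{ij}=0$ unless $k$ divides $i-j$. Then the discrete Laplacian $\Delta_N$ restricts to a vector space automorphism (linear bijection) of $\mathfrak D_0(N,k)$. Consequently the quantized Euler equations $\dot W=[\Delta_N^{-1}W,W]_N$ on $\mathfrak{su}(N)$ restrict to $\mathfrak D_0(N,k)$: the vector field $W\mapsto[\Delta_N^{-1}W,W]_N$ maps $\mathfrak D_0(N,k)$ into itself.
   Context: $\mathfrak{su}(N)$ is the Lie algebra of traceless skew-Hermitian $N\times N$ matrices, and $[A,B]_N=N^{3/2}(AB-BA)$. Let $\varrho$ be the irreducible $N$-dimensional representation of $\mathfrak{su}(2)$ by skew-Hermitian matrices and $X_1,X_2,X_3$ a basis of $\mathfrak{su}(2)$ orthonormal with respect to a non-degenerate ad-invariant bilinear form; the discrete Laplacian is $\Delta_N(Y)=\sum_{i=1}^3[\varrho(X_i),[\varrho(X_i),Y]]$, which is invertible on $\mathfrak{su}(N)$, and $\Delta_N^{-1}$ denotes its inverse there. *)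

theory Defs
  imports "Jordan_Normal_Form.Matrix"
begin

text \<open>Square complex matrices of size N are elements of carrier_mat N N;
  indices run over 0..N-1 (the condition "k divides i - j" is shift invariant).\<close>

definition skew_herm :: "nat \<Rightarrow> complex mat \<Rightarrow> bool" where
  "skew_herm N A \<longleftrightarrow> A \<in> carrier_mat N N \<and>
     (\<forall>i<N. \<forall>j<N. A $$ (i,j) = - cnj (A $$ (j,i)))"

definition mat_trace :: "nat \<Rightarrow> complex mat \<Rightarrow> complex" where
  "mat_trace N A = (\<Sum>i<N. A $$ (i,i))"

definition su :: "nat \<Rightarrow> complex mat set" where
  "su N = {A. skew_herm N A \<and> mat_trace N A = 0}"

definition DD :: "nat \<Rightarrow> nat \<Rightarrow> complex mat set" where
  "DD N k = {A. skew_herm N A \<and>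
     (\<forall>i<N. \<forall>j<N. \<not> (int k dvd (int i - int j)) \<longrightarrow> A $$ (i,j) = 0)}"

definition DD0 :: "nat \<Rightarrow> nat \<Rightarrow> complex mat set" where
  "DD0 N k = DD N k \<inter> su N"

definition brN :: "nat \<Rightarrow> complex mat \<Rightarrow> complex mat \<Rightarrow> complex mat" where
  "brN N A B = complex_of_real (real N powr (3/2)) \<cdot>\<^sub>m (A * B - B * A)"

definition comm :: "complex mat \<Rightarrow> complex mat \<Rightarrow> complex mat" where
  "comm A B = A * B - B * A"

text \<open>The irreducible N-dimensional (spin s = (N-1)/2) representation of su(2) in the
  standard weight basis e_0,...,e_{N-1}, with weights m_i = s - i.
  J3 = diag(m_i), J+ e_i = sqrt(s(s+1) - m_i(m_i+1)) e_{i-1},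
  J1 = (J+ + J-)/2, J2 = (J+ - J-)/(2i), and rho(X_a) = -i J_a, which satisfies
  [rho X1, rho X2] = rho X3 (cyclically).\<close>
definition spin_s :: "nat \<Rightarrow> real" where
  "spin_s N = (real N - 1) / 2"

definition weight :: "nat \<Rightarrow> nat \<Rightarrow> real" where
  "weight N i = spin_s N - real i"

definition Jplus :: "nat \<Rightarrow> complex mat" where
  "Jplus N = mat N N (\<lambda>(i,j). if j = i + 1 then
      complex_of_real (sqrt (spin_s N * (spin_s N + 1) - weight N j * (weight N j + 1)))
    else 0)"

definition Jminus :: "nat \<Rightarrow> complex mat" where
  "Jminus N = mat N N (\<lambda>(i,j). cnj (Jplus N $$ (j,i)))"

definition J3 :: "nat \<Rightarrow> complex mat" where
  "J3 N = mat N N (\<lambda>(i,j). if i = j then complex_of_real (weight N i) else 0)"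

definition J1 :: "nat \<Rightarrow> complex mat" where
  "J1 N = (1/2 :: complex) \<cdot>\<^sub>m (Jplus N + Jminus N)"

definition J2 :: "nat \<Rightarrow> complex mat" where
  "J2 N = (1/(2*\<i>) :: complex) \<cdot>\<^sub>m (Jplus N - Jminus N)"

definition rho :: "nat \<Rightarrow> nat \<Rightarrow> complex mat" where
  "rho N a = (- \<i>) \<cdot>\<^sub>m (if a = 1 then J1 N else if a = 2 then J2 N else J3 N)"

definition Lap :: "nat \<Rightarrow> complex mat \<Rightarrow> complex mat" where
  "Lap N Y = comm (rho N 1) (comm (rho N 1) Y) + comm (rho N 2) (comm (rho N 2) Y)
           + comm (rho N 3) (comm (rho N 3) Y)"

definition LapInv :: "nat \<Rightarrow> complex mat \<Rightarrow> complex mat" where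
  "LapInv N W = (THE Y. Y \<in> su N \<and> Lap N Y = W)"

end

theory Submission
  imports Defs "HOL-Library.Function_Algebras"
begin


context vector_space begin
lemma inj_surj_sub:
  assumes lin: "Vector_Spaces.linear scale scale F" and sub: "subspace V" and fW: "finite W"
    and VW: "V \<subseteq> span W" and FV: "F ` V \<subseteq> V" and inj: "inj_on F V"
  shows "V \<subseteq> F ` V"
proof -
  interpret h: module_hom scale scale F using lin by (simp add: module_hom_iff_linear)
  obtain T where T: "T \<subseteq> V" "independent T" "V \<subseteq> span T"
    using basis_exists by metis
  have fT: "finite T" using independent_span_bound[OF fW T(2)] T VW by blast
  have spT: "span T \<subseteq> V" using span_minimal[OF T(1) sub] .
  have injT: "inj_on F (span T)" using inj spT inj_on_subset by blast
  have indF: "independent (F ` T)"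
    using h.independent_injective_image[OF T(2) injT] .
  have cardF: "card (F ` T) = card T"
    using card_image inj_on_subset[OF injT span_superset] by blast
  have "V \<subseteq> span (F ` T)"
  proof
    fix a assume a: "a \<in> V"
    show "a \<in> span (F ` T)"
    proof (rule ccontr)
      assume na: "a \<notin> span (F ` T)"
      then have "a \<notin> F ` T" using span_superset by blast
      then have c: "card (insert a (F ` T)) = card T + 1" using fT cardF by simp
      have "independent (insert a (F ` T))" using independent_insertI[OF na indF] .
      moreover have "insert a (F ` T) \<subseteq> span T" using a T FV by blast
      ultimately have "card (insert a (F ` T)) \<le> card T"
        using independent_span_bound[OF fT] by blast
      with c show False by simp
    qed
  qed
  also have "span (F ` T) = F ` span T" using h.span_image .
  also have "\<dots> \<subseteq> F ` V" using spT by blast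
  finally show ?thesis .
qed
end


lemma Jplus_carrier[simp]: "Jplus N \<in> carrier_mat N N" by (simp add: Jplus_def)
lemma Jminus_carrier[simp]: "Jminus N \<in> carrier_mat N N" by (simp add: Jminus_def)
lemma J3_carrier[simp]: "J3 N \<in> carrier_mat N N" by (simp add: J3_def)
lemma dims_J[simp]: "dim_row (Jplus N) = N" "dim_col (Jplus N) = N" "dim_row (Jminus N) = N" "dim_col (Jminus N) = N"
  "dim_row (J3 N) = N" "dim_col (J3 N) = N"
  by (simp_all add: Jplus_def Jminus_def J3_def)
lemma rho_carrier[simp]: "rho N a \<in> carrier_mat N N"
  unfolding rho_def J1_def J2_def
  by (auto intro!: smult_carrier_mat add_carrier_mat minus_carrier_mat)

definition qq :: "nat \<Rightarrow> nat \<Rightarrow> complex" where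
  "qq N l = complex_of_real (sqrt (spin_s N * (spin_s N + 1) - weight N l * (weight N l + 1)))"
definition PP :: "nat \<Rightarrow> nat \<Rightarrow> nat \<Rightarrow> complex" where
  "PP N i l = (if l = i + 1 then qq N l else 0)"
definition MM :: "nat \<Rightarrow> nat \<Rightarrow> nat \<Rightarrow> complex" where
  "MM N i l = (if i = l + 1 then qq N i else 0)"
definition DD3 :: "nat \<Rightarrow> nat \<Rightarrow> nat \<Rightarrow> complex" where
  "DD3 N i l = (if i = l then complex_of_real (weight N i) else 0)"

lemma cnj_qq[simp]: "cnj (qq N l) = qq N l" by (simp add: qq_def)

lemma Jplus_ent: "i < N \<Longrightarrow> l < N \<Longrightarrow> Jplus N $$ (i,l) = PP N i l"
  by (simp add: Jplus_def PP_def qq_def)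
lemma Jminus_ent: "i < N \<Longrightarrow> l < N \<Longrightarrow> Jminus N $$ (i,l) = MM N i l"
  by (simp add: Jminus_def Jplus_def MM_def qq_def)
lemma J3_ent: "i < N \<Longrightarrow> l < N \<Longrightarrow> J3 N $$ (i,l) = DD3 N i l"
  by (simp add: J3_def DD3_def)

lemma rho1_ent: "i < N \<Longrightarrow> l < N \<Longrightarrow> rho N 1 $$ (i,l) = - \<i> * (1/2 * (PP N i l + MM N i l))"
  by (simp add: rho_def J1_def Jplus_ent Jminus_ent index_smult_mat)
lemma rho2_ent: "i < N \<Longrightarrow> l < N \<Longrightarrow> rho N 2 $$ (i,l) = - \<i> * (1/(2*\<i>) * (PP N i l - MM N i l))"
  by (simp add: rho_def J2_def Jplus_ent Jminus_ent index_smult_mat)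
lemma rho3_ent: "i < N \<Longrightarrow> l < N \<Longrightarrow> rho N 3 $$ (i,l) = - \<i> * DD3 N i l"
  by (simp add: rho_def J3_ent index_smult_mat)

lemma rho1_ent': "i < N \<Longrightarrow> l < N \<Longrightarrow> rho N (Suc 0) $$ (i,l) = - \<i> * (1/2 * (PP N i l + MM N i l))"
  using rho1_ent by simp

lemma comm_carrier[simp]: "A \<in> carrier_mat N N \<Longrightarrow> B \<in> carrier_mat N N \<Longrightarrow> comm A B \<in> carrier_mat N N"
  unfolding comm_def by (auto intro!: minus_carrier_mat mult_carrier_mat)

lemma Lap_carrier[simp]: "Y \<in> carrier_mat N N \<Longrightarrow> Lap N Y \<in> carrier_mat N N"
  unfolding Lap_def by (auto intro!: add_carrier_mat comm_carrier)

lemma rho_dims[simp]: "dim_row (rho N a) = N" "dim_col (rho N a) = N"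
  using rho_carrier[of N a] by (auto simp del: rho_carrier)

lemma comm_entry: "K \<in> carrier_mat N N \<Longrightarrow> Y \<in> carrier_mat N N \<Longrightarrow> i < N \<Longrightarrow> j < N \<Longrightarrow>
  comm K Y $$ (i,j) = (\<Sum>l<N. K $$ (i,l) * Y $$ (l,j) - Y $$ (i,l) * K $$ (l,j))"
  by (simp add: comm_def index_mult_mat scalar_prod_def sum_subtractf atLeast0LessThan)

definition Gt :: "nat \<Rightarrow> complex mat \<Rightarrow> complex mat \<Rightarrow> nat \<Rightarrow> nat \<Rightarrow> nat \<Rightarrow> nat \<Rightarrow> complex" where
  "Gt N K Y i j l m = K $$ (i,l) * K $$ (l,m) * Y $$ (m,j)
     - K $$ (i,l) * Y $$ (l,m) * K $$ (m,j) - K $$ (i,m) * Y $$ (m,l) * K $$ (l,j)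
     + Y $$ (i,m) * K $$ (m,l) * K $$ (l,j)"

lemma comm2_entry: "K \<in> carrier_mat N N \<Longrightarrow> Y \<in> carrier_mat N N \<Longrightarrow> i < N \<Longrightarrow> j < N \<Longrightarrow>
  comm K (comm K Y) $$ (i,j) = (\<Sum>l<N. \<Sum>m<N. Gt N K Y i j l m)"
  unfolding Gt_def
  apply (simp add: comm_entry[of K N] comm_carrier)
  apply (rule sum.cong, simp)
  apply (simp add: sum_distrib_left sum_distrib_right sum_subtractf[symmetric] sum.distrib[symmetric] algebra_simps)
  done

lemma add3_entry: "A \<in> carrier_mat N N \<Longrightarrow> B \<in> carrier_mat N N \<Longrightarrow> C \<in> carrier_mat N N \<Longrightarrow>
  i < N \<Longrightarrow> j < N \<Longrightarrow> (A + B + C) $$ (i,j) = A $$ (i,j) + B $$ (i,j) + C $$ (i,j)"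
  by simp

lemma Lap_entry: "Y \<in> carrier_mat N N \<Longrightarrow> i < N \<Longrightarrow> j < N \<Longrightarrow>
  Lap N Y $$ (i,j) = (\<Sum>l<N. \<Sum>m<N. Gt N (rho N 1) Y i j l m + Gt N (rho N 2) Y i j l m + Gt N (rho N 3) Y i j l m)"
proof -
  assume Y: "Y \<in> carrier_mat N N" and ij: "i < N" "j < N"
  have "Lap N Y $$ (i,j) = comm (rho N 1) (comm (rho N 1) Y) $$ (i,j) + comm (rho N 2) (comm (rho N 2) Y) $$ (i,j)
     + comm (rho N 3) (comm (rho N 3) Y) $$ (i,j)"
    unfolding Lap_def by (rule add3_entry, use Y ij in auto)
  also have "\<dots> = (\<Sum>l<N. \<Sum>m<N. Gt N (rho N 1) Y i j l m) + (\<Sum>l<N. \<Sum>m<N. Gt N (rho N 2) Y i j l m)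
     + (\<Sum>l<N. \<Sum>m<N. Gt N (rho N 3) Y i j l m)"
    by (simp only: comm2_entry[OF rho_carrier Y ij])
  also have "\<dots> = (\<Sum>l<N. \<Sum>m<N. Gt N (rho N 1) Y i j l m + Gt N (rho N 2) Y i j l m + Gt N (rho N 3) Y i j l m)"
    by (simp only: sum.distrib)
  finally show ?thesis .
qed

definition cc :: "nat \<Rightarrow> nat \<Rightarrow> nat \<Rightarrow> nat \<Rightarrow> nat \<Rightarrow> complex" where
  "cc N i l m j = rho N 1 $$ (i,l) * rho N 1 $$ (m,j) + rho N 2 $$ (i,l) * rho N 2 $$ (m,j)
     + rho N 3 $$ (i,l) * rho N 3 $$ (m,j)"

lemma cc_formula: "i < N \<Longrightarrow> l < N \<Longrightarrow> m < N \<Longrightarrow> j < N \<Longrightarrow>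
  cc N i l m j = - (PP N i l * MM N m j + MM N i l * PP N m j) / 2 - DD3 N i l * DD3 N m j"
  unfolding cc_def by (simp add: rho1_ent' rho2_ent rho3_ent field_simps)

lemma cc_nz: "i < N \<Longrightarrow> l < N \<Longrightarrow> m < N \<Longrightarrow> j < N \<Longrightarrow> cc N i l m j \<noteq> 0 \<Longrightarrow>
  int l - int i = int m - int j"
  by (auto simp: cc_formula PP_def MM_def DD3_def split: if_splits)

lemma Gt_sum: "i < N \<Longrightarrow> l < N \<Longrightarrow> m < N \<Longrightarrow> j < N \<Longrightarrow>
  Gt N (rho N 1) Y i j l m + Gt N (rho N 2) Y i j l m + Gt N (rho N 3) Y i j l m =
  cc N i l l m * Y $$ (m,j) - cc N i l m j * Y $$ (l,m) - cc N i m l j * Y $$ (m,l) + Y $$ (i,m) * cc N m l l j"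
  unfolding Gt_def cc_def by (simp add: algebra_simps)

definition supp :: "nat \<Rightarrow> nat \<Rightarrow> complex mat \<Rightarrow> bool" where
  "supp N k A \<longleftrightarrow> (\<forall>i<N. \<forall>j<N. \<not> (int k dvd (int i - int j)) \<longrightarrow> A $$ (i,j) = 0)"

lemma Lap_supp: assumes Y: "Y \<in> carrier_mat N N" and s: "supp N k Y"
  shows "supp N k (Lap N Y)"
  unfolding supp_def
proof (intro allI impI)
  fix i j assume ij: "i < N" "j < N" and nd: "\<not> int k dvd (int i - int j)"
  have "Gt N (rho N 1) Y i j l m + Gt N (rho N 2) Y i j l m + Gt N (rho N 3) Y i j l m = 0"
    if lm: "l < N" "m < N" for l m
  proof -
    have t1: "cc N i l l m * Y $$ (m,j) = 0"
    proof (cases "cc N i l l m = 0")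
      case False
      then have "m = i" using cc_nz[OF ij(1) lm(1) lm(1) lm(2)] by simp
      then show ?thesis using s nd ij unfolding supp_def by simp
    qed simp
    have t4: "Y $$ (i,m) * cc N m l l j = 0"
    proof (cases "cc N m l l j = 0")
      case False
      then have "m = j" using cc_nz[OF lm(2) lm(1) lm(1) ij(2)] by simp
      then show ?thesis using s nd ij unfolding supp_def by simp
    qed simp
    have t2: "cc N i l m j * Y $$ (l,m) = 0"
    proof (cases "cc N i l m j = 0")
      case False
      then have e: "int l - int i = int m - int j" using cc_nz[OF ij(1) lm(1) lm(2) ij(2)] by simp
      have "\<not> int k dvd (int l - int m)"
      proof
        assume "int k dvd (int l - int m)"
        moreover have "int i - int j = int l - int m" using e by simp
        ultimately show False using nd by simp
      qed
      then show ?thesis using s lm unfolding supp_def by simp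
    qed simp
    have t3: "cc N i m l j * Y $$ (m,l) = 0"
    proof (cases "cc N i m l j = 0")
      case False
      then have e: "int m - int i = int l - int j" using cc_nz[OF ij(1) lm(2) lm(1) ij(2)] by simp
      have "\<not> int k dvd (int m - int l)"
      proof
        assume "int k dvd (int m - int l)"
        moreover have "int i - int j = int m - int l" using e by simp
        ultimately show False using nd by simp
      qed
      then show ?thesis using s lm unfolding supp_def by simp
    qed simp
    show ?thesis unfolding Gt_sum[OF ij(1) lm(1) lm(2) ij(2)] t1 t2 t3 t4 by simp
  qed
  then show "Lap N Y $$ (i,j) = 0" using Lap_entry[OF Y ij] by simp
qed



lemma Gt_add: "A \<in> carrier_mat N N \<Longrightarrow> B \<in> carrier_mat N N \<Longrightarrow> i < N \<Longrightarrow> j < N \<Longrightarrow> l < N \<Longrightarrow> m < N \<Longrightarrow>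
  Gt N K (A + B) i j l m = Gt N K A i j l m + Gt N K B i j l m"
  unfolding Gt_def by (simp add: algebra_simps)
lemma Gt_minus: "A \<in> carrier_mat N N \<Longrightarrow> B \<in> carrier_mat N N \<Longrightarrow> i < N \<Longrightarrow> j < N \<Longrightarrow> l < N \<Longrightarrow> m < N \<Longrightarrow>
  Gt N K (A - B) i j l m = Gt N K A i j l m - Gt N K B i j l m"
  unfolding Gt_def by (simp add: algebra_simps)
lemma Gt_smult: "A \<in> carrier_mat N N \<Longrightarrow> i < N \<Longrightarrow> j < N \<Longrightarrow> l < N \<Longrightarrow> m < N \<Longrightarrow>
  Gt N K (c \<cdot>\<^sub>m A) i j l m = c * Gt N K A i j l m"
  unfolding Gt_def by (simp add: algebra_simps)

lemma Lap_add: assumes A: "A \<in> carrier_mat N N" and B: "B \<in> carrier_mat N N"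
  shows "Lap N (A + B) = Lap N A + Lap N B"
proof (rule eq_matI)
  have AB: "A + B \<in> carrier_mat N N" using A B by simp
  show "dim_row (Lap N (A + B)) = dim_row (Lap N A + Lap N B)" using carrier_matD[OF Lap_carrier[OF A]] carrier_matD[OF Lap_carrier[OF B]] carrier_matD[OF Lap_carrier[OF AB]] by simp
  show "dim_col (Lap N (A + B)) = dim_col (Lap N A + Lap N B)" using carrier_matD[OF Lap_carrier[OF A]] carrier_matD[OF Lap_carrier[OF B]] carrier_matD[OF Lap_carrier[OF AB]] by simp
  fix i j assume "i < dim_row (Lap N A + Lap N B)" "j < dim_col (Lap N A + Lap N B)"
  then have ij: "i < N" "j < N" using carrier_matD[OF Lap_carrier[OF A]] carrier_matD[OF Lap_carrier[OF B]] by auto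
  have "Lap N (A + B) $$ (i, j) = (\<Sum>l<N. \<Sum>m<N. 
     (Gt N (rho N 1) A i j l m + Gt N (rho N 2) A i j l m + Gt N (rho N 3) A i j l m) +
     (Gt N (rho N 1) B i j l m + Gt N (rho N 2) B i j l m + Gt N (rho N 3) B i j l m))"
    unfolding Lap_entry[OF AB ij]
    by (intro sum.cong refl) (simp add: Gt_add[OF A B ij] ac_simps)
  also have "\<dots> = Lap N A $$ (i,j) + Lap N B $$ (i,j)"
    unfolding Lap_entry[OF A ij] Lap_entry[OF B ij] by (simp only: sum.distrib)
  finally show "Lap N (A + B) $$ (i, j) = (Lap N A + Lap N B) $$ (i, j)"
    using ij carrier_matD[OF Lap_carrier[OF A]] carrier_matD[OF Lap_carrier[OF B]] by simp
qed

lemma Lap_minus: assumes A: "A \<in> carrier_mat N N" and B: "B \<in> carrier_mat N N"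
  shows "Lap N (A - B) = Lap N A - Lap N B"
proof (rule eq_matI)
  have AB: "A - B \<in> carrier_mat N N" using B by (rule minus_carrier_mat)
  show "dim_row (Lap N (A - B)) = dim_row (Lap N A - Lap N B)" using carrier_matD[OF Lap_carrier[OF A]] carrier_matD[OF Lap_carrier[OF B]] carrier_matD[OF Lap_carrier[OF AB]] by simp
  show "dim_col (Lap N (A - B)) = dim_col (Lap N A - Lap N B)" using carrier_matD[OF Lap_carrier[OF A]] carrier_matD[OF Lap_carrier[OF B]] carrier_matD[OF Lap_carrier[OF AB]] by simp
  fix i j assume "i < dim_row (Lap N A - Lap N B)" "j < dim_col (Lap N A - Lap N B)"
  then have ij: "i < N" "j < N" using carrier_matD[OF Lap_carrier[OF A]] carrier_matD[OF Lap_carrier[OF B]] by auto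
  have "Lap N (A - B) $$ (i, j) = (\<Sum>l<N. \<Sum>m<N. 
     (Gt N (rho N 1) A i j l m + Gt N (rho N 2) A i j l m + Gt N (rho N 3) A i j l m) -
     (Gt N (rho N 1) B i j l m + Gt N (rho N 2) B i j l m + Gt N (rho N 3) B i j l m))"
    unfolding Lap_entry[OF AB ij]
    by (intro sum.cong refl) (simp add: Gt_minus[OF A B ij])
  also have "\<dots> = Lap N A $$ (i,j) - Lap N B $$ (i,j)"
    unfolding Lap_entry[OF A ij] Lap_entry[OF B ij] by (simp only: sum_subtractf)
  finally show "Lap N (A - B) $$ (i, j) = (Lap N A - Lap N B) $$ (i, j)"
    using ij carrier_matD[OF Lap_carrier[OF A]] carrier_matD[OF Lap_carrier[OF B]] by simp
qed

lemma Lap_smult: assumes A: "A \<in> carrier_mat N N"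
  shows "Lap N (c \<cdot>\<^sub>m A) = c \<cdot>\<^sub>m Lap N A"
proof (rule eq_matI)
  have AB: "c \<cdot>\<^sub>m A \<in> carrier_mat N N" using A by simp
  show "dim_row (Lap N (c \<cdot>\<^sub>m A)) = dim_row (c \<cdot>\<^sub>m Lap N A)" using carrier_matD[OF Lap_carrier[OF A]] carrier_matD[OF Lap_carrier[OF AB]] by simp
  show "dim_col (Lap N (c \<cdot>\<^sub>m A)) = dim_col (c \<cdot>\<^sub>m Lap N A)" using carrier_matD[OF Lap_carrier[OF A]] carrier_matD[OF Lap_carrier[OF AB]] by simp
  fix i j assume "i < dim_row (c \<cdot>\<^sub>m Lap N A)" "j < dim_col (c \<cdot>\<^sub>m Lap N A)"
  then have ij: "i < N" "j < N" using carrier_matD[OF Lap_carrier[OF A]] by auto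
  have "Lap N (c \<cdot>\<^sub>m A) $$ (i, j) = (\<Sum>l<N. \<Sum>m<N. 
     c * (Gt N (rho N 1) A i j l m + Gt N (rho N 2) A i j l m + Gt N (rho N 3) A i j l m))"
    unfolding Lap_entry[OF AB ij]
    by (intro sum.cong refl) (simp add: Gt_smult[OF A ij] distrib_left)
  also have "\<dots> = c * Lap N A $$ (i,j)"
    unfolding Lap_entry[OF A ij] by (simp only: sum_distrib_left)
  finally show "Lap N (c \<cdot>\<^sub>m A) $$ (i, j) = (c \<cdot>\<^sub>m Lap N A) $$ (i, j)"
    using ij carrier_matD[OF Lap_carrier[OF A]] by simp
qed
lemma skew_entry: "skew_herm N A \<Longrightarrow> i < N \<Longrightarrow> j < N \<Longrightarrow> A $$ (i,j) = - cnj (A $$ (j,i))"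
  unfolding skew_herm_def by blast

lemma rho_skew: "skew_herm N (rho N a)"
proof -
  have "rho N a $$ (i,j) = - cnj (rho N a $$ (j,i))" if "i < N" "j < N" for i j
  proof -
    consider "a = 1" | "a = 2" | "a \<noteq> 1 \<and> a \<noteq> 2" by blast
    then show ?thesis
    proof cases
      case 1 then show ?thesis using that by (simp add: rho1_ent' PP_def MM_def)
    next
      case 2 then show ?thesis using that by (simp add: rho2_ent PP_def MM_def field_simps)
    next
      case 3
      then have "rho N a = rho N 3" by (simp add: rho_def)
      then show ?thesis using that by (simp add: rho3_ent DD3_def)
    qed
  qed
  then show ?thesis unfolding skew_herm_def using rho_carrier by blast
qed

lemma comm_skew: assumes K: "skew_herm N K" and Y: "skew_herm N Y"
  shows "skew_herm N (comm K Y)"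
proof -
  have KC: "K \<in> carrier_mat N N" and YC: "Y \<in> carrier_mat N N" using K Y by (auto simp: skew_herm_def)
  have "comm K Y $$ (i,j) = - cnj (comm K Y $$ (j,i))" if ij: "i < N" "j < N" for i j
  proof -
    have "cnj (comm K Y $$ (j,i)) = (\<Sum>l<N. cnj (K $$ (j,l)) * cnj (Y $$ (l,i)) - cnj (Y $$ (j,l)) * cnj (K $$ (l,i)))"
      using ij by (simp add: comm_entry[OF KC YC])
    then have "- cnj (comm K Y $$ (j,i)) = (\<Sum>l<N. - (cnj (K $$ (j,l)) * cnj (Y $$ (l,i)) - cnj (Y $$ (j,l)) * cnj (K $$ (l,i))))"
      by (simp only: sum_negf)
    also have "\<dots> = (\<Sum>l<N. K $$ (i,l) * Y $$ (l,j) - Y $$ (i,l) * K $$ (l,j))"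
    proof (rule sum.cong)
      fix l assume "l \<in> {..<N}"
      then have l: "l < N" by simp
      have e1: "cnj (K $$ (j,l)) = - K $$ (l,j)" using skew_entry[OF K l ij(2)] by simp
      have e2: "cnj (Y $$ (l,i)) = - Y $$ (i,l)" using skew_entry[OF Y ij(1) l] by simp
      have e3: "cnj (Y $$ (j,l)) = - Y $$ (l,j)" using skew_entry[OF Y l ij(2)] by simp
      have e4: "cnj (K $$ (l,i)) = - K $$ (i,l)" using skew_entry[OF K ij(1) l] by simp
      show "- (cnj (K $$ (j,l)) * cnj (Y $$ (l,i)) - cnj (Y $$ (j,l)) * cnj (K $$ (l,i))) =
        K $$ (i,l) * Y $$ (l,j) - Y $$ (i,l) * K $$ (l,j)"
        unfolding e1 e2 e3 e4 by (simp add: algebra_simps)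
    qed simp
    also have "\<dots> = comm K Y $$ (i,j)" using comm_entry[OF KC YC ij] by simp
    finally show ?thesis by simp
  qed
  then show ?thesis using KC YC comm_carrier unfolding skew_herm_def by blast
qed

lemma add_skew: assumes A: "skew_herm N A" and B: "skew_herm N B" shows "skew_herm N (A + B)"
proof -
  have AC: "A \<in> carrier_mat N N" and BC: "B \<in> carrier_mat N N" using A B by (auto simp: skew_herm_def)
  have "(A + B) $$ (i,j) = - cnj ((A + B) $$ (j,i))" if ij: "i < N" "j < N" for i j
  proof -
    have "(A + B) $$ (i,j) = A $$ (i,j) + B $$ (i,j)" using AC BC ij by simp
    also have "\<dots> = - cnj (A $$ (j,i)) - cnj (B $$ (j,i))" using skew_entry[OF A ij] skew_entry[OF B ij] by simp
    also have "\<dots> = - cnj ((A + B) $$ (j,i))" using AC BC ij by simp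
    finally show ?thesis .
  qed
  moreover have "A + B \<in> carrier_mat N N" using AC BC by simp
  ultimately show ?thesis unfolding skew_herm_def by blast
qed

lemma Lap_skew: "skew_herm N Y \<Longrightarrow> skew_herm N (Lap N Y)"
  unfolding Lap_def by (intro add_skew comm_skew rho_skew)

lemma trace_comm: assumes KC: "K \<in> carrier_mat N N" and YC: "Y \<in> carrier_mat N N"
  shows "mat_trace N (comm K Y) = 0"
proof -
  have "mat_trace N (comm K Y) = (\<Sum>i<N. \<Sum>l<N. K $$ (i,l) * Y $$ (l,i)) - (\<Sum>i<N. \<Sum>l<N. Y $$ (i,l) * K $$ (l,i))"
    unfolding mat_trace_def by (simp add: comm_entry[OF KC YC] sum_subtractf)
  also have "(\<Sum>i<N. \<Sum>l<N. Y $$ (i,l) * K $$ (l,i)) = (\<Sum>l<N. \<Sum>i<N. Y $$ (i,l) * K $$ (l,i))"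
    by (rule sum.swap)
  finally show ?thesis by (simp add: mult.commute)
qed

lemma trace_add: "mat_trace N (A + B) = mat_trace N A + mat_trace N B" if "A \<in> carrier_mat N N" "B \<in> carrier_mat N N"
  using that unfolding mat_trace_def by (simp add: sum.distrib)

lemma Lap_trace: "Y \<in> carrier_mat N N \<Longrightarrow> mat_trace N (Lap N Y) = 0"
  unfolding Lap_def by (simp add: trace_add trace_comm)



lemma sum3_swap13: "(\<Sum>i<N. \<Sum>j<N. \<Sum>l<N. f i j l) = (\<Sum>l<N. \<Sum>j<N. \<Sum>i<(N::nat). f i j l :: complex)"
proof -
  have "(\<Sum>i<N. \<Sum>j<N. \<Sum>l<N. f i j l) = (\<Sum>i<N. \<Sum>l<N. \<Sum>j<N. f i j l)"
    by (rule sum.cong[OF refl], rule sum.swap)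
  also have "\<dots> = (\<Sum>l<N. \<Sum>i<N. \<Sum>j<N. f i j l)" by (rule sum.swap)
  also have "\<dots> = (\<Sum>l<N. \<Sum>j<N. \<Sum>i<N. f i j l)"
    by (rule sum.cong[OF refl], rule sum.swap)
  finally show ?thesis .
qed

lemma sum3_swap23: "(\<Sum>i<N. \<Sum>j<N. \<Sum>l<N. f i j l) = (\<Sum>i<N. \<Sum>l<N. \<Sum>j<(N::nat). f i j l :: complex)"
  by (rule sum.cong[OF refl], rule sum.swap)

lemma pos_comm: assumes K: "skew_herm N K" and YC: "Y \<in> carrier_mat N N"
  shows "(\<Sum>i<N. \<Sum>j<N. cnj (Y $$ (i,j)) * comm K (comm K Y) $$ (i,j))
     = - (\<Sum>i<N. \<Sum>j<N. cnj (comm K Y $$ (i,j)) * comm K Y $$ (i,j))"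
proof -
  have KC: "K \<in> carrier_mat N N" using K by (simp add: skew_herm_def)
  define Z where "Z = comm K Y"
  have ZC: "Z \<in> carrier_mat N N" using KC YC by (simp add: Z_def)
  have cK: "cnj (K $$ (a,b)) = - K $$ (b,a)" if "a < N" "b < N" for a b
    using skew_entry[OF K that(2) that(1)] by simp
  have "(\<Sum>i<N. \<Sum>j<N. cnj (Y $$ (i,j)) * comm K Z $$ (i,j))
     = (\<Sum>i<N. \<Sum>j<N. \<Sum>l<N. cnj (Y $$ (i,j)) * K $$ (i,l) * Z $$ (l,j))
     - (\<Sum>i<N. \<Sum>j<N. \<Sum>l<N. cnj (Y $$ (i,j)) * Z $$ (i,l) * K $$ (l,j))"
  proof -
    have "cnj (Y $$ (i,j)) * comm K Z $$ (i,j) = (\<Sum>l<N. cnj (Y $$ (i,j)) * K $$ (i,l) * Z $$ (l,j))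
       - (\<Sum>l<N. cnj (Y $$ (i,j)) * Z $$ (i,l) * K $$ (l,j))" if "i < N" "j < N" for i j
      unfolding comm_entry[OF KC ZC that] sum_distrib_left right_diff_distrib sum_subtractf
      by (simp add: mult.assoc)
    then show ?thesis by (simp add: sum_subtractf)
  qed
  also have "(\<Sum>i<N. \<Sum>j<N. \<Sum>l<N. cnj (Y $$ (i,j)) * K $$ (i,l) * Z $$ (l,j))
     = (\<Sum>i<N. \<Sum>j<N. \<Sum>l<N. K $$ (l,i) * cnj (Y $$ (l,j)) * Z $$ (i,j))"
    by (subst sum3_swap13) (simp add: mult.commute mult.left_commute)
  also have "(\<Sum>i<N. \<Sum>j<N. \<Sum>l<N. cnj (Y $$ (i,j)) * Z $$ (i,l) * K $$ (l,j))
     = (\<Sum>i<N. \<Sum>j<N. \<Sum>l<N. cnj (Y $$ (i,l)) * K $$ (j,l) * Z $$ (i,j))"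
    by (subst sum3_swap23) (simp add: mult.commute mult.left_commute)
  also have "(\<Sum>i<N. \<Sum>j<N. \<Sum>l<N. K $$ (l,i) * cnj (Y $$ (l,j)) * Z $$ (i,j))
      - (\<Sum>i<N. \<Sum>j<N. \<Sum>l<N. cnj (Y $$ (i,l)) * K $$ (j,l) * Z $$ (i,j))
      = - (\<Sum>i<N. \<Sum>j<N. cnj (Z $$ (i,j)) * Z $$ (i,j))"
  proof -
    have "cnj (Z $$ (i,j)) * Z $$ (i,j) = - ((\<Sum>l<N. K $$ (l,i) * cnj (Y $$ (l,j)) * Z $$ (i,j))
        - (\<Sum>l<N. cnj (Y $$ (i,l)) * K $$ (j,l) * Z $$ (i,j)))" if ij: "i < N" "j < N" for i j
    proof -
      have "cnj (Z $$ (i,j)) = (\<Sum>l<N. cnj (K $$ (i,l)) * cnj (Y $$ (l,j)) - cnj (Y $$ (i,l)) * cnj (K $$ (l,j)))"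
        unfolding Z_def using ij by (simp add: comm_entry[OF KC YC])
      also have "\<dots> = (\<Sum>l<N. - (K $$ (l,i) * cnj (Y $$ (l,j))) + cnj (Y $$ (i,l)) * K $$ (j,l))"
        by (rule sum.cong[OF refl]) (simp add: cK ij)
      finally have "cnj (Z $$ (i,j)) * Z $$ (i,j) = (\<Sum>l<N. - (K $$ (l,i) * cnj (Y $$ (l,j))) + cnj (Y $$ (i,l)) * K $$ (j,l)) * Z $$ (i,j)"
        by simp
      also have "\<dots> = (\<Sum>l<N. - (K $$ (l,i) * cnj (Y $$ (l,j)) * Z $$ (i,j)) + cnj (Y $$ (i,l)) * K $$ (j,l) * Z $$ (i,j))"
        by (simp add: sum_distrib_right sum_distrib_left algebra_simps)
      also have "\<dots> = - ((\<Sum>l<N. K $$ (l,i) * cnj (Y $$ (l,j)) * Z $$ (i,j))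
        - (\<Sum>l<N. cnj (Y $$ (i,l)) * K $$ (j,l) * Z $$ (i,j)))"
        by (simp add: sum.distrib sum_negf sum_subtractf)
      finally show ?thesis .
    qed
    then have "(\<Sum>i<N. \<Sum>j<N. cnj (Z $$ (i,j)) * Z $$ (i,j)) = (\<Sum>i<N. \<Sum>j<N. - ((\<Sum>l<N. K $$ (l,i) * cnj (Y $$ (l,j)) * Z $$ (i,j))
        - (\<Sum>l<N. cnj (Y $$ (i,l)) * K $$ (j,l) * Z $$ (i,j))))"
      by simp
    then show ?thesis by (simp add: sum_negf sum_subtractf)
  qed
  finally show ?thesis unfolding Z_def .
qed



lemma sum_single: "finite A \<Longrightarrow> a \<in> A \<Longrightarrow> (\<And>x. x \<in> A \<Longrightarrow> x \<noteq> a \<Longrightarrow> f x = 0) \<Longrightarrow> sum f A = f a"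
  by (simp add: sum.remove sum.neutral)

definition nsq :: "nat \<Rightarrow> complex mat \<Rightarrow> real" where
  "nsq N Z = (\<Sum>i<N. \<Sum>j<N. (norm (Z $$ (i,j)))\<^sup>2)"

lemma cnj_sum_nsq: "(\<Sum>i<N. \<Sum>j<N. cnj (Z $$ (i,j)) * Z $$ (i,j)) = complex_of_real (nsq N Z)"
  unfolding nsq_def of_real_sum complex_norm_square by (simp add: mult.commute)

lemma nsq_nonneg: "nsq N Z \<ge> 0"
  unfolding nsq_def by (intro sum_nonneg) auto

lemma nsq_zero: assumes "nsq N Z = 0" "i < N" "j < N" shows "Z $$ (i,j) = 0"
proof -
  have "\<forall>i\<in>{..<N}. (\<Sum>j<N. (norm (Z $$ (i,j)))\<^sup>2) = 0"
    using assms(1) unfolding nsq_def by (subst (asm) sum_nonneg_eq_0_iff) (auto intro: sum_nonneg)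
  then have "(\<Sum>j<N. (norm (Z $$ (i,j)))\<^sup>2) = 0" using assms by auto
  then have "\<forall>j\<in>{..<N}. (norm (Z $$ (i,j)))\<^sup>2 = 0"
    by (subst (asm) sum_nonneg_eq_0_iff) auto
  then show ?thesis using assms by auto
qed

lemma Lap_kernel_comm: assumes YC: "Y \<in> carrier_mat N N" and L: "Lap N Y = 0\<^sub>m N N"
  shows "\<And>i j. i < N \<Longrightarrow> j < N \<Longrightarrow> comm (rho N a) Y $$ (i,j) = 0"
proof -
  define Z where "Z a = comm (rho N a) Y" for a
  have h1: "(\<Sum>i<N. \<Sum>j<N. cnj (Y $$ (i,j)) * Lap N Y $$ (i,j)) = 0" using L by simp
  have h2: "(\<Sum>i<N. \<Sum>j<N. cnj (Y $$ (i,j)) * Lap N Y $$ (i,j)) =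
      (\<Sum>i<N. \<Sum>j<N. cnj (Y $$ (i,j)) * comm (rho N 1) (comm (rho N 1) Y) $$ (i,j))
    + (\<Sum>i<N. \<Sum>j<N. cnj (Y $$ (i,j)) * comm (rho N 2) (comm (rho N 2) Y) $$ (i,j))
    + (\<Sum>i<N. \<Sum>j<N. cnj (Y $$ (i,j)) * comm (rho N 3) (comm (rho N 3) Y) $$ (i,j))"
  proof -
    have "cnj (Y $$ (i,j)) * Lap N Y $$ (i,j) = cnj (Y $$ (i,j)) * comm (rho N 1) (comm (rho N 1) Y) $$ (i,j)
      + cnj (Y $$ (i,j)) * comm (rho N 2) (comm (rho N 2) Y) $$ (i,j)
      + cnj (Y $$ (i,j)) * comm (rho N 3) (comm (rho N 3) Y) $$ (i,j)" if "i < N" "j < N" for i j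
    proof -
      have "Lap N Y $$ (i,j) = comm (rho N 1) (comm (rho N 1) Y) $$ (i,j)
       + comm (rho N 2) (comm (rho N 2) Y) $$ (i,j) + comm (rho N 3) (comm (rho N 3) Y) $$ (i,j)"
        unfolding Lap_def by (rule add3_entry, use YC that in auto)
      then show ?thesis by (simp add: distrib_left)
    qed
    then show ?thesis by (simp add: sum.distrib)
  qed
  have h3: "(\<Sum>i<N. \<Sum>j<N. cnj (Y $$ (i,j)) * comm (rho N a) (comm (rho N a) Y) $$ (i,j))
     = - complex_of_real (nsq N (Z a))" for a
    unfolding Z_def pos_comm[OF rho_skew YC] cnj_sum_nsq ..
  have "(\<Sum>i<N. \<Sum>j<N. cnj (Y $$ (i,j)) * comm (rho N 1) (comm (rho N 1) Y) $$ (i,j))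
    + (\<Sum>i<N. \<Sum>j<N. cnj (Y $$ (i,j)) * comm (rho N 2) (comm (rho N 2) Y) $$ (i,j))
    + (\<Sum>i<N. \<Sum>j<N. cnj (Y $$ (i,j)) * comm (rho N 3) (comm (rho N 3) Y) $$ (i,j)) = 0"
    using h1 unfolding h2 .
  then have "- complex_of_real (nsq N (Z 1)) + - complex_of_real (nsq N (Z 2)) + - complex_of_real (nsq N (Z 3)) = 0"
    unfolding h3 .
  then have "complex_of_real (nsq N (Z 1) + nsq N (Z 2) + nsq N (Z 3)) = 0"
    by (simp only: of_real_add minus_add_distrib[symmetric] neg_equal_0_iff_equal)
  then have s0: "nsq N (Z 1) + nsq N (Z 2) + nsq N (Z 3) = 0" by (simp only: of_real_eq_0_iff)
  have "nsq N (Z a) = 0" for a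
  proof -
    have z: "nsq N (Z 1) = 0" "nsq N (Z 2) = 0" "nsq N (Z 3) = 0"
      using s0 nsq_nonneg[of N "Z 1"] nsq_nonneg[of N "Z 2"] nsq_nonneg[of N "Z 3"] by linarith+
    consider "a = 1" | "a = 2" | "a \<noteq> 1 \<and> a \<noteq> 2" by blast
    then show ?thesis
    proof cases
      case 3
      then have "rho N a = rho N 3" by (simp add: rho_def)
      then have "Z a = Z 3" by (simp add: Z_def)
      then show ?thesis using z by simp
    qed (use z in auto)
  qed
  then show "\<And>i j. i < N \<Longrightarrow> j < N \<Longrightarrow> comm (rho N a) Y $$ (i,j) = 0"
    using nsq_zero unfolding Z_def by blast
qed

lemma qq_nz: "i + 1 < N \<Longrightarrow> qq N (i + 1) \<noteq> 0"
proof -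
  assume i: "i + 1 < N"
  have "spin_s N * (spin_s N + 1) - weight N (i+1) * (weight N (i+1) + 1) = (real i + 1) * (real N - 1 - real i)"
    unfolding weight_def spin_s_def by (simp add: field_simps)
  moreover have "(real i + 1) * (real N - 1 - real i) > 0" using i by simp
  ultimately have "0 < spin_s N * (spin_s N + 1) - weight N (i+1) * (weight N (i+1) + 1)" by simp
  then have "sqrt (spin_s N * (spin_s N + 1) - weight N (i+1) * (weight N (i+1) + 1)) \<noteq> 0" by simp
  then show ?thesis unfolding qq_def by (simp only: of_real_eq_0_iff not_False_eq_True)
qed

lemma weight_diff: "weight N i - weight N j = real j - real i"
  unfolding weight_def by simp

lemma Lap_inj0: assumes YC: "Y \<in> carrier_mat N N" and tr: "mat_trace N Y = 0" and L: "Lap N Y = 0\<^sub>m N N"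
  shows "Y = 0\<^sub>m N N"
proof -
  note c = Lap_kernel_comm[OF YC L]
  have off: "Y $$ (i,j) = 0" if ij: "i < N" "j < N" "i \<noteq> j" for i j
  proof -
    have "comm (rho N 3) Y $$ (i,j) = (\<Sum>l<N. rho N 3 $$ (i,l) * Y $$ (l,j)) - (\<Sum>l<N. Y $$ (i,l) * rho N 3 $$ (l,j))"
      using comm_entry[OF rho_carrier YC ij(1,2)] by (simp add: sum_subtractf)
    also have "(\<Sum>l<N. rho N 3 $$ (i,l) * Y $$ (l,j)) = rho N 3 $$ (i,i) * Y $$ (i,j)"
      by (rule sum_single) (use ij in \<open>auto simp: rho3_ent DD3_def\<close>)
    also have "(\<Sum>l<N. Y $$ (i,l) * rho N 3 $$ (l,j)) = Y $$ (i,j) * rho N 3 $$ (j,j)"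
      by (rule sum_single) (use ij in \<open>auto simp: rho3_ent DD3_def\<close>)
    finally have "rho N 3 $$ (i,i) * Y $$ (i,j) - Y $$ (i,j) * rho N 3 $$ (j,j) = 0" using c[OF ij(1,2)] by simp
    then have "(- \<i> * complex_of_real (weight N i - weight N j)) * Y $$ (i,j) = 0"
      using ij by (simp add: rho3_ent DD3_def algebra_simps)
    moreover have "weight N i - weight N j \<noteq> 0" using ij(3) unfolding weight_diff by simp
    ultimately show ?thesis by simp
  qed
  have diag: "Y $$ (Suc i, Suc i) = Y $$ (i,i)" if i: "Suc i < N" for i
  proof -
    have i': "i < N" using i by simp
    have "comm (rho N 1) Y $$ (i,Suc i) = (\<Sum>l<N. rho N 1 $$ (i,l) * Y $$ (l,Suc i)) - (\<Sum>l<N. Y $$ (i,l) * rho N 1 $$ (l,Suc i))"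
      using comm_entry[OF rho_carrier YC i' i] by (simp add: sum_subtractf)
    also have "(\<Sum>l<N. rho N 1 $$ (i,l) * Y $$ (l,Suc i)) = rho N 1 $$ (i,Suc i) * Y $$ (Suc i,Suc i)"
      by (rule sum_single) (use i off in auto)
    also have "(\<Sum>l<N. Y $$ (i,l) * rho N 1 $$ (l,Suc i)) = Y $$ (i,i) * rho N 1 $$ (i,Suc i)"
      by (rule sum_single) (use i off in auto)
    finally have e: "rho N 1 $$ (i,Suc i) * Y $$ (Suc i,Suc i) - Y $$ (i,i) * rho N 1 $$ (i,Suc i) = 0"
      using c[OF i' i] by simp
    moreover have "rho N 1 $$ (i,Suc i) \<noteq> 0"
      using qq_nz[of i N] i by (simp add: rho1_ent' PP_def MM_def)
    moreover have "rho N 1 $$ (i,Suc i) * (Y $$ (Suc i,Suc i) - Y $$ (i,i)) = 0"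
      unfolding right_diff_distrib mult.commute[of "rho N 1 $$ (i,Suc i)" "Y $$ (i,i)"] using e by (simp only:)
    ultimately show ?thesis by simp
  qed
  have dall: "Y $$ (i,i) = Y $$ (0,0)" if "i < N" for i
    using that by (induction i) (auto simp: diag)
  have "mat_trace N Y = (\<Sum>i<N. Y $$ (0,0))"
    unfolding mat_trace_def by (rule sum.cong[OF refl]) (rule dall, simp)
  also have "\<dots> = of_nat N * Y $$ (0,0)" by simp
  finally have "N = 0 \<or> Y $$ (0,0) = 0" using tr by simp
  then have y0: "Y $$ (0,0) = 0" if "0 < N" using that by simp
  have "Y $$ (i,j) = 0" if ij: "i < N" "j < N" for i j
  proof (cases "i = j")
    case True
    then show ?thesis using dall[OF ij(1)] y0 ij by simp
  next
    case False
    then show ?thesis using off ij by simp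
  qed
  then show ?thesis using YC by (intro eq_matI) auto
qed



lemma sum_fun_apply: "(sum f A) x = (\<Sum>a\<in>A. f a x)" for f :: "'i \<Rightarrow> 'x \<Rightarrow> 'b::comm_monoid_add"
  by (induction A rule: infinite_finite_induct) auto

definition sc :: "real \<Rightarrow> (nat \<times> nat \<Rightarrow> complex) \<Rightarrow> (nat \<times> nat \<Rightarrow> complex)" where
  "sc r f = (\<lambda>x. complex_of_real r * f x)"

lemma vs_sc: "vector_space sc"
  by unfold_locales (auto simp: sc_def fun_eq_iff algebra_simps)

definition tof :: "nat \<Rightarrow> complex mat \<Rightarrow> (nat \<times> nat \<Rightarrow> complex)" where
  "tof N A = (\<lambda>(i,j). if i < N \<and> j < N then A $$ (i,j) else 0)"

lemma back_tof: "A \<in> carrier_mat N N \<Longrightarrow> mat N N (tof N A) = A"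
  by (intro eq_matI) (auto simp: tof_def)

lemma tof_inj: "A \<in> carrier_mat N N \<Longrightarrow> B \<in> carrier_mat N N \<Longrightarrow> tof N A = tof N B \<Longrightarrow> A = B"
  by (metis back_tof)

lemma tof_add: "A \<in> carrier_mat N N \<Longrightarrow> B \<in> carrier_mat N N \<Longrightarrow> tof N (A + B) = tof N A + tof N B"
  by (auto simp: tof_def fun_eq_iff)

lemma tof_smult: "A \<in> carrier_mat N N \<Longrightarrow> tof N (complex_of_real r \<cdot>\<^sub>m A) = sc r (tof N A)"
  by (auto simp: tof_def sc_def fun_eq_iff)

lemma tof_zero: "tof N (0\<^sub>m N N) = 0"
  by (auto simp: tof_def fun_eq_iff)

lemma mat_add_fun: "mat N N (f + g) = mat N N f + mat N N g"
  by (intro eq_matI) auto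

lemma mat_sc_fun: "mat N N (sc r f) = complex_of_real r \<cdot>\<^sub>m mat N N f"
  by (intro eq_matI) (auto simp: sc_def)

definition FF :: "nat \<Rightarrow> (nat \<times> nat \<Rightarrow> complex) \<Rightarrow> (nat \<times> nat \<Rightarrow> complex)" where
  "FF N g = tof N (Lap N (mat N N g))"

lemma FF_linear: "Vector_Spaces.linear sc sc (FF N)"
  unfolding Vector_Spaces.linear_iff
proof (intro conjI allI vs_sc)
  fix x y
  show "FF N (x + y) = FF N x + FF N y"
    unfolding FF_def mat_add_fun by (simp add: Lap_add tof_add)
next
  fix c x
  show "FF N (sc c x) = sc c (FF N x)"
    unfolding FF_def mat_sc_fun by (simp add: Lap_smult tof_smult)
qed

lemma FF_tof: "A \<in> carrier_mat N N \<Longrightarrow> FF N (tof N A) = tof N (Lap N A)"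
  unfolding FF_def by (simp add: back_tof)

definition ee :: "nat \<times> nat \<Rightarrow> complex \<Rightarrow> (nat \<times> nat \<Rightarrow> complex)" where
  "ee p c = (\<lambda>x. if x = p then c else 0)"

lemma span_tof: "tof N A \<in> module.span sc ((\<lambda>(p,c). ee p c) ` (({..<N} \<times> {..<N}) \<times> {1, \<i>}))"
proof -
  interpret v: vector_space sc by (rule vs_sc)
  let ?S = "{..<N} \<times> {..<N}"
  let ?W = "(\<lambda>(p,c). ee p c) ` (?S \<times> {1, \<i>})"
  have "tof N A = (\<Sum>p\<in>?S. sc (Re (A $$ p)) (ee p 1) + sc (Im (A $$ p)) (ee p \<i>))"
  proof
    fix x
    show "tof N A x = (\<Sum>p\<in>?S. sc (Re (A $$ p)) (ee p 1) + sc (Im (A $$ p)) (ee p \<i>)) x"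
    proof (cases "x \<in> ?S")
      case True
      have "(\<Sum>p\<in>?S. sc (Re (A $$ p)) (ee p 1) + sc (Im (A $$ p)) (ee p \<i>)) x
         = (\<Sum>p\<in>?S. (sc (Re (A $$ p)) (ee p 1) + sc (Im (A $$ p)) (ee p \<i>)) x)"
        by (rule sum_fun_apply)
      also have "\<dots> = (sc (Re (A $$ x)) (ee x 1) + sc (Im (A $$ x)) (ee x \<i>)) x"
        by (rule sum_single) (use True in \<open>auto simp: sc_def ee_def\<close>)
      also have "\<dots> = A $$ x" by (simp add: sc_def ee_def complex_eq_iff)
      finally show ?thesis using True by (auto simp: tof_def)
    next
      case False
      have "(\<Sum>p\<in>?S. sc (Re (A $$ p)) (ee p 1) + sc (Im (A $$ p)) (ee p \<i>)) x
         = (\<Sum>p\<in>?S. (sc (Re (A $$ p)) (ee p 1) + sc (Im (A $$ p)) (ee p \<i>)) x)"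
        by (rule sum_fun_apply)
      also have "\<dots> = 0"
        by (rule sum.neutral) (use False in \<open>auto simp: sc_def ee_def\<close>)
      finally show ?thesis using False by (cases x) (auto simp: tof_def)
    qed
  qed
  also have "\<dots> \<in> v.span ?W"
  proof (rule v.span_sum)
    fix p assume p: "p \<in> ?S"
    have "ee p 1 \<in> ?W" using p by force
    moreover have "ee p \<i> \<in> ?W" using p by force
    ultimately show "sc (Re (A $$ p)) (ee p 1) + sc (Im (A $$ p)) (ee p \<i>) \<in> v.span ?W"
      by (intro v.span_add v.span_scale v.span_base)
  qed
  finally show ?thesis .
qed



lemma DD0_iff: "A \<in> DD0 N k \<longleftrightarrow> skew_herm N A \<and> supp N k A \<and> mat_trace N A = 0"
  unfolding DD0_def DD_def su_def supp_def by auto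

lemma skew_carrier: "skew_herm N A \<Longrightarrow> A \<in> carrier_mat N N"
  unfolding skew_herm_def by simp

lemma trace_minus: "A \<in> carrier_mat N N \<Longrightarrow> B \<in> carrier_mat N N \<Longrightarrow> mat_trace N (A - B) = mat_trace N A - mat_trace N B"
  unfolding mat_trace_def by (simp add: sum_subtractf)

lemma trace_smult: "A \<in> carrier_mat N N \<Longrightarrow> mat_trace N (c \<cdot>\<^sub>m A) = c * mat_trace N A"
  unfolding mat_trace_def by (simp add: sum_distrib_left)

lemma Lap_inj: assumes A: "A \<in> carrier_mat N N" and B: "B \<in> carrier_mat N N"
  and tA: "mat_trace N A = 0" and tB: "mat_trace N B = 0" and L: "Lap N A = Lap N B"
  shows "A = B"
proof -
  have AB: "A - B \<in> carrier_mat N N" using B by (rule minus_carrier_mat)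
  have "Lap N (A - B) = 0\<^sub>m N N" using Lap_minus[OF A B] L Lap_carrier[OF B] by simp
  then have "A - B = 0\<^sub>m N N" using Lap_inj0[OF AB] trace_minus[OF A B] tA tB by simp
  have "A $$ (i,j) = B $$ (i,j)" if "i < N" "j < N" for i j
  proof -
    have "(A - B) $$ (i,j) = 0" using \<open>A - B = 0\<^sub>m N N\<close> that by simp
    then show ?thesis using that A B by simp
  qed
  then show ?thesis using A B by (intro eq_matI) auto
qed

lemma skew_smult_real: assumes A: "skew_herm N A" shows "skew_herm N (complex_of_real r \<cdot>\<^sub>m A)"
proof -
  have AC: "A \<in> carrier_mat N N" using A by (rule skew_carrier)
  have "(complex_of_real r \<cdot>\<^sub>m A) $$ (i,j) = - cnj ((complex_of_real r \<cdot>\<^sub>m A) $$ (j,i))" if ij: "i < N" "j < N" for i j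
  proof -
    have "(complex_of_real r \<cdot>\<^sub>m A) $$ (i,j) = complex_of_real r * A $$ (i,j)" using AC ij by simp
    also have "\<dots> = complex_of_real r * - cnj (A $$ (j,i))" using skew_entry[OF A ij] by simp
    also have "\<dots> = - cnj ((complex_of_real r \<cdot>\<^sub>m A) $$ (j,i))" using AC ij by simp
    finally show ?thesis .
  qed
  moreover have "complex_of_real r \<cdot>\<^sub>m A \<in> carrier_mat N N" using AC by simp
  ultimately show ?thesis unfolding skew_herm_def by blast
qed

lemma supp_add: "A \<in> carrier_mat N N \<Longrightarrow> B \<in> carrier_mat N N \<Longrightarrow> supp N k A \<Longrightarrow> supp N k B \<Longrightarrow> supp N k (A + B)"
  unfolding supp_def by auto

lemma supp_smult: "A \<in> carrier_mat N N \<Longrightarrow> supp N k A \<Longrightarrow> supp N k (c \<cdot>\<^sub>m A)"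
  unfolding supp_def by auto

lemma supp_comm: assumes A: "A \<in> carrier_mat N N" and B: "B \<in> carrier_mat N N"
  and sA: "supp N k A" and sB: "supp N k B" shows "supp N k (comm A B)"
  unfolding supp_def
proof (intro allI impI)
  fix i j assume ij: "i < N" "j < N" and nd: "\<not> int k dvd (int i - int j)"
  have "A $$ (i,l) * B $$ (l,j) - B $$ (i,l) * A $$ (l,j) = 0" if l: "l < N" for l
  proof -
    have "\<not> (int k dvd (int i - int l) \<and> int k dvd (int l - int j))"
    proof
      assume "int k dvd (int i - int l) \<and> int k dvd (int l - int j)"
      then have "int k dvd ((int i - int l) + (int l - int j))" by (intro dvd_add) auto
      then show False using nd by simp
    qed
    then show ?thesis using sA sB ij l unfolding supp_def by auto
  qed
  then show "comm A B $$ (i,j) = 0" using comm_entry[OF A B ij] by simp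
qed

lemma DD0_add: "A \<in> DD0 N k \<Longrightarrow> B \<in> DD0 N k \<Longrightarrow> A + B \<in> DD0 N k"
  unfolding DD0_iff using add_skew supp_add trace_add skew_carrier by simp

lemma DD0_smult: "A \<in> DD0 N k \<Longrightarrow> complex_of_real r \<cdot>\<^sub>m A \<in> DD0 N k"
  unfolding DD0_iff using skew_smult_real supp_smult trace_smult skew_carrier by simp

lemma DD0_zero: "0\<^sub>m N N \<in> DD0 N k"
  unfolding DD0_iff skew_herm_def supp_def mat_trace_def by simp

lemma DD0_Lap: "A \<in> DD0 N k \<Longrightarrow> Lap N A \<in> DD0 N k"
  unfolding DD0_iff using Lap_skew Lap_supp Lap_trace skew_carrier by simp

lemma DD0_surj: assumes W: "W \<in> DD0 N k" shows "\<exists>A\<in>DD0 N k. Lap N A = W"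
proof -
  interpret v: vector_space sc by (rule vs_sc)
  let ?V = "tof N ` DD0 N k"
  let ?W = "(\<lambda>(p,c). ee p c) ` (({..<N} \<times> {..<N}) \<times> {1, \<i>})"
  have sub: "v.subspace ?V"
    unfolding v.subspace_def
  proof (intro conjI ballI allI)
    show "0 \<in> ?V" using DD0_zero tof_zero by (metis image_eqI)
  next
    fix x y assume "x \<in> ?V" "y \<in> ?V"
    then obtain A B where A: "A \<in> DD0 N k" "x = tof N A" and B: "B \<in> DD0 N k" "y = tof N B" by auto
    have "x + y = tof N (A + B)" using A B tof_add skew_carrier DD0_iff by metis
    then show "x + y \<in> ?V" using DD0_add[OF A(1) B(1)] by blast
  next
    fix c x assume "x \<in> ?V"
    then obtain A where A: "A \<in> DD0 N k" "x = tof N A" by auto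
    have "sc c x = tof N (complex_of_real c \<cdot>\<^sub>m A)" using A tof_smult skew_carrier DD0_iff by metis
    then show "sc c x \<in> ?V" using DD0_smult[OF A(1)] by blast
  qed
  have fW: "finite ?W" by simp
  have VW: "?V \<subseteq> v.span ?W" using span_tof by blast
  have FV: "FF N ` ?V \<subseteq> ?V"
  proof
    fix y assume "y \<in> FF N ` ?V"
    then obtain A where A: "A \<in> DD0 N k" "y = FF N (tof N A)" by auto
    then have "y = tof N (Lap N A)" using FF_tof skew_carrier DD0_iff by metis
    then show "y \<in> ?V" using DD0_Lap[OF A(1)] by blast
  qed
  have inj: "inj_on (FF N) ?V"
  proof (rule inj_onI)
    fix x y assume "x \<in> ?V" "y \<in> ?V" and e: "FF N x = FF N y"
    then obtain A B where A: "A \<in> DD0 N k" "x = tof N A" and B: "B \<in> DD0 N k" "y = tof N B" by auto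
    have AC: "A \<in> carrier_mat N N" and BC: "B \<in> carrier_mat N N" using A B DD0_iff skew_carrier by auto
    have "tof N (Lap N A) = tof N (Lap N B)" using e A B FF_tof[OF AC] FF_tof[OF BC] by simp
    then have "Lap N A = Lap N B" using tof_inj Lap_carrier AC BC by metis
    then have "A = B" using Lap_inj[OF AC BC] A B DD0_iff by auto
    then show "x = y" using A B by simp
  qed
  have "?V \<subseteq> FF N ` ?V" using v.inj_surj_sub[OF FF_linear sub fW VW FV inj] .
  moreover have "tof N W \<in> ?V" using W by blast
  ultimately obtain A where A: "A \<in> DD0 N k" "tof N W = FF N (tof N A)" by blast
  have AC: "A \<in> carrier_mat N N" and WC: "W \<in> carrier_mat N N" using A W DD0_iff skew_carrier by auto
  have "tof N W = tof N (Lap N A)" using A FF_tof[OF AC] by simp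
  then have "W = Lap N A" using tof_inj[OF WC Lap_carrier[OF AC]] by simp
  then show ?thesis using A by blast
qed

theorem mainTheorem5:
  fixes N k :: nat
  assumes "N \<ge> 2" and "0 < k" and "k \<le> N"
  shows "(\<forall>A\<in>DD0 N k. \<forall>B\<in>DD0 N k. Lap N (A + B) = Lap N A + Lap N B)
       \<and> (\<forall>c::real. \<forall>A\<in>DD0 N k. Lap N (complex_of_real c \<cdot>\<^sub>m A) = complex_of_real c \<cdot>\<^sub>m Lap N A)
       \<and> bij_betw (Lap N) (DD0 N k) (DD0 N k)
       \<and> (\<forall>W\<in>DD0 N k. brN N (LapInv N W) W \<in> DD0 N k)"
proof (intro conjI ballI allI)
  fix A B assume "A \<in> DD0 N k" "B \<in> DD0 N k"
  then show "Lap N (A + B) = Lap N A + Lap N B"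
    using Lap_add DD0_iff skew_carrier by metis
next
  fix c :: real and A assume "A \<in> DD0 N k"
  then show "Lap N (complex_of_real c \<cdot>\<^sub>m A) = complex_of_real c \<cdot>\<^sub>m Lap N A"
    using Lap_smult DD0_iff skew_carrier by metis
next
  show "bij_betw (Lap N) (DD0 N k) (DD0 N k)"
    unfolding bij_betw_def
  proof
    show "inj_on (Lap N) (DD0 N k)"
      by (rule inj_onI) (use Lap_inj DD0_iff skew_carrier in metis)
    show "Lap N ` DD0 N k = DD0 N k"
      using DD0_Lap DD0_surj by blast
  qed
next
  fix W assume W: "W \<in> DD0 N k"
  obtain A where A: "A \<in> DD0 N k" "Lap N A = W" using DD0_surj[OF W] by blast
  have AC: "A \<in> carrier_mat N N" and WC: "W \<in> carrier_mat N N" using A W DD0_iff skew_carrier by auto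
  have "LapInv N W = A"
    unfolding LapInv_def
  proof (rule the_equality)
    show "A \<in> su N \<and> Lap N A = W" using A unfolding DD0_def by auto
  next
    fix Y assume Y: "Y \<in> su N \<and> Lap N Y = W"
    then have YC: "Y \<in> carrier_mat N N" and tY: "mat_trace N Y = 0"
      unfolding su_def skew_herm_def by auto
    show "Y = A" using Lap_inj[OF YC AC tY] A Y DD0_iff by auto
  qed
  moreover have "brN N A W \<in> DD0 N k"
  proof -
    have e: "brN N A W = complex_of_real (real N powr (3/2)) \<cdot>\<^sub>m comm A W"
      unfolding brN_def comm_def ..
    have "comm A W \<in> DD0 N k"
      unfolding DD0_iff
      using comm_skew supp_comm trace_comm A W DD0_iff AC WC by auto
    then show ?thesis unfolding e by (rule DD0_smult)
  qed
  ultimately show "brN N (LapInv N W) W \<in> DD0 N k" by simp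
qed

end
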